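(* Let $\mathcal{G}_T$ be a planar graph with an isoradial embedding, $\mathcal{G}_D$ its superposition with its dual, $\bar\partial$ the matrix on $\mathcal{G}_D$ and $\bar D=S\bar\partial S$ as described below. Then for vertices $b,b'$ of $\mathcal{G}_T$ we have $(\bar D^*\bar D)(b,b')=\Delta_{\mathcal{G}_T}(b,b')$, and for vertices $b,b'$ of $\mathcal{G}_T^*$ (faces of $\mathcal{G}_T$) we have $(\bar D^*\bar D)(b,b')=\Delta_{\mathcal{G}_T^*}(b,b')$.
   Context: An isoradial embedding of a planar graph is an embedding in which every face is inscribed in a circle of a common radius, with center in the closure of the face; the dual $\mathcal{G}_T^*$ is embedded with vertices at the circumcenters. Each edge $e$ of $\mathcal{G}_T$ has a rhombus with vertices the endpoints of $e$ and of $e^*$; its half-angle $\theta(e)\in[0,\pi/2]$ is half its angle at the endpoints of $e$. $\Delta_{\mathcal{G}_T}$ is the Laplacian $\Delta f(u)=\sum_{w\sim u}c(uw)(f(u)-f(w))$ with conductances $c(e)=\tan\theta(e)$, and $\Delta_{\mathcal{G}_T^*}$ the Laplacian on $\mathcal{G}_T^*$ with conductances $c(e^* )=\tan(\pi/2-\theta(e))$. The graph $\mathcal{G}_D$ has a black vertex for each vertex and each face of $\mathcal{G}_T$, a white vertex $w_e$ for each edge $e$ of $\mathcal{G}_T$ (placed at the intersection of $e$ and $e^*$), and $w_e$ is joined to the two endpoints of $e$ and the two endpoints of $e^*$. Scaling so that $\mathcal{G}_D$ is isoradial with radius $1$, each rhombus of $\mathcal{G}_T$ of half-angle $\theta$ is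 divided into four congruent rhombi of $\mathcal{G}_D$, two of half-angle $\theta$ (for the half-edges of $e$) and two of half-angle $\pi/2-\theta$ (for the half-edges of $e^*$). On $\mathcal{G}_D$, $\bar\partial$ is the symmetric matrix, zero on non-adjacent pairs, with $\bar\partial(w,b)=\bar\partial(b,w)=i(x-y)$ where the rhombus of edge $wb$ has vertices $w,x,b,y$ in counterclockwise order (so $|\bar\partial|=2\sin\theta$ on primal half-edges and $2\cos\theta$ on dual half-edges). $S$ is diagonal with $S(b,b)=1$ for black $b$ and $S(w_e,w_e)=1/(2\sqrt{\sin\theta(e)\cos\theta(e)})$, and $\bar D=S\bar\partial S$; $\bar D^*$ is the conjugate transpose. *)

theory Defs
  imports "HOL-Analysis.Analysis"
begin

text \<open>Vertices of G_T: type 'v (set Vs); faces of G_T = vertices of the dual: type 'f (set Fs);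
  edges: type 'e (set Es).  Edge e is oriented from src e to tgt e; lft e / rgt e are the
  faces on its left / right.  posn gives the positions of the vertices, ctr the
  circumcenters of the faces, rad the common radius.\<close>

record ('v, 'f, 'e) iso_graph =
  Vs   :: "'v set"
  Fs   :: "'f set"
  Es   :: "'e set"
  posn :: "'v \<Rightarrow> complex"
  ctr  :: "'f \<Rightarrow> complex"
  src  :: "'e \<Rightarrow> 'v"
  tgt  :: "'e \<Rightarrow> 'v"
  lft  :: "'e \<Rightarrow> 'f"
  rgt  :: "'e \<Rightarrow> 'f"
  rad  :: real

text \<open>Isoradial embedding: every face is inscribed in a circle of radius rad around its
  circumcenter; for each edge e the rhombus src e, ctr (rgt e), tgt e, ctr (lft e) is in
  counterclockwise order (left face on the left of the oriented edge, right face on the right,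
  possibly degenerate); the graph is locally finite.\<close>

definition isoradial_embedding :: "('v, 'f, 'e) iso_graph \<Rightarrow> bool" where
  "isoradial_embedding G \<longleftrightarrow>
     rad G > 0 \<and> inj_on (posn G) (Vs G) \<and>
     (\<forall>e\<in>Es G. src G e \<in> Vs G \<and> tgt G e \<in> Vs G \<and> lft G e \<in> Fs G \<and> rgt G e \<in> Fs G \<and>
        src G e \<noteq> tgt G e \<and>
        cmod (posn G (src G e) - ctr G (lft G e)) = rad G \<and>
        cmod (posn G (tgt G e) - ctr G (lft G e)) = rad G \<and>
        cmod (posn G (src G e) - ctr G (rgt G e)) = rad G \<and>
        cmod (posn G (tgt G e) - ctr G (rgt G e)) = rad G \<and>
        Im (cnj (posn G (tgt G e) - posn G (src G e)) * (ctr G (lft G e) - posn G (src G e))) \<ge> 0 \<and>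
        Im (cnj (posn G (tgt G e) - posn G (src G e)) * (ctr G (rgt G e) - posn G (src G e))) \<le> 0) \<and>
     (\<forall>v\<in>Vs G. finite {e\<in>Es G. src G e = v \<or> tgt G e = v}) \<and>
     (\<forall>f\<in>Fs G. finite {e\<in>Es G. lft G e = f \<or> rgt G e = f})"

text \<open>Half-angle theta(e): half of the angle of the rhombus of e at its endpoint src e,
  i.e. half the (counterclockwise) angle from ctr (rgt e) - src e to ctr (lft e) - src e.\<close>

definition half_angle :: "('v, 'f, 'e) iso_graph \<Rightarrow> 'e \<Rightarrow> real" where
  "half_angle G e =
     Arg ((ctr G (lft G e) - posn G (src G e)) / (ctr G (rgt G e) - posn G (src G e))) / 2"

definition cond :: "('v, 'f, 'e) iso_graph \<Rightarrow> 'e \<Rightarrow> real" where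
  "cond G e = tan (half_angle G e)"

definition cond_dual :: "('v, 'f, 'e) iso_graph \<Rightarrow> 'e \<Rightarrow> real" where
  "cond_dual G e = tan (pi / 2 - half_angle G e)"

definition lap_T :: "('v, 'f, 'e) iso_graph \<Rightarrow> ('v \<Rightarrow> real) \<Rightarrow> 'v \<Rightarrow> real" where
  "lap_T G h u = (\<Sum>e\<in>{e\<in>Es G. src G e = u \<or> tgt G e = u}.
      cond G e * (h u - h (if src G e = u then tgt G e else src G e)))"

definition lap_D :: "('v, 'f, 'e) iso_graph \<Rightarrow> ('f \<Rightarrow> real) \<Rightarrow> 'f \<Rightarrow> real" where
  "lap_D G h f = (\<Sum>e\<in>{e\<in>Es G. lft G e = f \<or> rgt G e = f}.
      cond_dual G e * (h f - h (if lft G e = f then rgt G e else lft G e)))"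

definition lap_T_mat :: "('v, 'f, 'e) iso_graph \<Rightarrow> 'v \<Rightarrow> 'v \<Rightarrow> real" where
  "lap_T_mat G b b' = lap_T G (\<lambda>x. if x = b' then 1 else 0) b"

definition lap_D_mat :: "('v, 'f, 'e) iso_graph \<Rightarrow> 'f \<Rightarrow> 'f \<Rightarrow> real" where
  "lap_D_mat G b b' = lap_D G (\<lambda>x. if x = b' then 1 else 0) b"

text \<open>The superposition graph G_D.  Vertices: type ('v + 'f) + 'e; black vertices are
  Inl (Inl v) (vertices of G_T) and Inl (Inr f) (faces of G_T), white vertices are Inr e.\<close>

type_synonym ('v, 'f, 'e) gd_vertex = "('v + 'f) + 'e"

definition GD_vertices :: "('v, 'f, 'e) iso_graph \<Rightarrow> ('v, 'f, 'e) gd_vertex set" where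
  "GD_vertices G = Inl ` (Inl ` Vs G \<union> Inr ` Fs G) \<union> Inr ` Es G"

text \<open>Embedding of G_D, scaled so that G_D is isoradial with radius 1 (i.e. G_T has
  radius 2 after scaling by 2 / rad).\<close>

definition scl :: "('v, 'f, 'e) iso_graph \<Rightarrow> complex \<Rightarrow> complex" where
  "scl G z = complex_of_real (2 / rad G) * z"

definition midp :: "complex \<Rightarrow> complex \<Rightarrow> complex" where
  "midp a b = (a + b) / 2"

text \<open>The four half-edges of G_D at the white vertex w_e, each given as
  (black endpoint b, x, y) where the rhombus of the half-edge w_e b has vertices
  w_e, x, b, y in counterclockwise order (x, y are midpoints of sides of the rhombus of e,
  i.e. circumcenters of faces of G_D).\<close>

definition GD_half_edges :: "('v, 'f, 'e) iso_graph \<Rightarrow> 'e \<Rightarrow>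
    (('v + 'f) \<times> complex \<times> complex) list" where
  "GD_half_edges G e =
     (let u  = scl G (posn G (src G e)); u' = scl G (posn G (tgt G e));
          fl = scl G (ctr G (lft G e)); fr = scl G (ctr G (rgt G e))
      in [ (Inl (src G e), midp u fl,  midp u fr),
           (Inl (tgt G e), midp u' fr, midp u' fl),
           (Inr (rgt G e), midp fr u,  midp fr u'),
           (Inr (lft G e), midp fl u', midp fl u) ])"

text \<open>dbar(w,b) = dbar(b,w) = i (x - y); zero on non-adjacent pairs (entries of parallel
  half-edges are added).\<close>

definition dbar_wb :: "('v, 'f, 'e) iso_graph \<Rightarrow> 'e \<Rightarrow> 'v + 'f \<Rightarrow> complex" where
  "dbar_wb G e b =
     (if e \<in> Es G then
        sum_list (map (\<lambda>(b', x, y). \<i> * (x - y)) (filter (\<lambda>(b', x, y). b' = b) (GD_half_edges G e)))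
      else 0)"

definition dbar :: "('v, 'f, 'e) iso_graph \<Rightarrow> ('v, 'f, 'e) gd_vertex \<Rightarrow> ('v, 'f, 'e) gd_vertex \<Rightarrow> complex" where
  "dbar G p q = (case (p, q) of
       (Inr e, Inl b) \<Rightarrow> dbar_wb G e b
     | (Inl b, Inr e) \<Rightarrow> dbar_wb G e b
     | _ \<Rightarrow> 0)"

definition Smat :: "('v, 'f, 'e) iso_graph \<Rightarrow> ('v, 'f, 'e) gd_vertex \<Rightarrow> complex" where
  "Smat G p = (case p of
       Inl b \<Rightarrow> 1
     | Inr e \<Rightarrow> complex_of_real (1 / (2 * sqrt (sin (half_angle G e) * cos (half_angle G e)))))"

definition Dbar :: "('v, 'f, 'e) iso_graph \<Rightarrow> ('v, 'f, 'e) gd_vertex \<Rightarrow> ('v, 'f, 'e) gd_vertex \<Rightarrow> complex" where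
  "Dbar G p q = Smat G p * dbar G p q * Smat G q"

text \<open>(Dbar^* Dbar)(p,q) = sum over x of conj(Dbar(x,p)) Dbar(x,q); the sum is finitely
  supported by local finiteness.\<close>

definition DstarD :: "('v, 'f, 'e) iso_graph \<Rightarrow> ('v, 'f, 'e) gd_vertex \<Rightarrow> ('v, 'f, 'e) gd_vertex \<Rightarrow> complex" where
  "DstarD G p q = (\<Sum>\<^sub>\<infinity>x\<in>GD_vertices G. cnj (Dbar G x p) * Dbar G x q)"

end

theory Submission
  imports Defs
begin

lemma geom:
  fixes z w d :: complex and r :: real
  assumes "r > 0" "cmod z = r" "cmod w = r" "cmod (z - d) = r" "cmod (w - d) = r" "d \<noteq> 0"
    "Im (cnj d * z) \<ge> 0" "Im (cnj d * w) \<le> 0"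
  shows "z + w = d \<and> Im (z * cnj w) \<ge> 0"
proof -
  obtain z1 z2 where z: "z = Complex z1 z2" by (metis complex.exhaust)
  obtain w1 w2 where w: "w = Complex w1 w2" by (metis complex.exhaust)
  obtain d1 d2 where d: "d = Complex d1 d2" by (metis complex.exhaust)
  have e1: "z1^2 + z2^2 = r^2" using assms(2) cmod_power2[of z] z by simp
  have e2: "w1^2 + w2^2 = r^2" using assms(3) cmod_power2[of w] w by simp
  have e3: "(z1-d1)^2 + (z2-d2)^2 = r^2" using assms(4) cmod_power2[of "z-d"] z d by simp
  have e4: "(w1-d1)^2 + (w2-d2)^2 = r^2" using assms(5) cmod_power2[of "w-d"] w d by simp
  have D: "d1^2 + d2^2 > 0" using assms(6) d
    by (metis add_nonneg_nonneg complex.expand complex.sel(1) complex.sel(2) sum_power2_eq_zero_iff zero_complex.simps(1) zero_complex.simps(2) less_le zero_le_power2)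
  have i1: "d1*z2 - d2*z1 \<ge> 0" using assms(7) z d by simp
  have i2: "d1*w2 - d2*w1 \<le> 0" using assms(8) w d by simp
  have r1: "2*(d1*z1 + d2*z2) = d1^2 + d2^2" using e1 e3 by (simp add: power2_eq_square algebra_simps)
  have r2: "2*(d1*w1 + d2*w2) = d1^2 + d2^2" using e2 e4 by (simp add: power2_eq_square algebra_simps)
  have n1: "(d1*z1 + d2*z2)^2 + (d1*z2 - d2*z1)^2 = (d1^2+d2^2)*r^2"
  proof -
    have "(d1*z1 + d2*z2)^2 + (d1*z2 - d2*z1)^2 = (d1^2+d2^2)*(z1^2+z2^2)" by algebra
    then show ?thesis using e1 by simp
  qed
  have n2: "(d1*w1 + d2*w2)^2 + (d1*w2 - d2*w1)^2 = (d1^2+d2^2)*r^2"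
  proof -
    have "(d1*w1 + d2*w2)^2 + (d1*w2 - d2*w1)^2 = (d1^2+d2^2)*(w1^2+w2^2)" by algebra
    then show ?thesis using e2 by simp
  qed
  have sq: "(d1*z2 - d2*z1)^2 = (d1*w2 - d2*w1)^2"
  proof -
    have "2*(d1*z1 + d2*z2) = 2*(d1*w1 + d2*w2)" using r1 r2 by (simp only:)
    then have "d1*z1 + d2*z2 = d1*w1 + d2*w2" by simp
    then have "(d1*z1 + d2*z2)^2 = (d1*w1 + d2*w2)^2" by simp
    then show ?thesis using n1 n2 by linarith
  qed
  have im: "d1*z2 - d2*z1 = -(d1*w2 - d2*w1)"
  proof -
    have "\<bar>d1*z2 - d2*z1\<bar> = \<bar>d1*w2 - d2*w1\<bar>" using sq by (metis power2_eq_iff abs_minus_cancel abs_of_nonneg abs_of_nonpos abs_abs)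
    then show ?thesis using i1 i2 by linarith
  qed
  have l1: "d1*(z1+w1) + d2*(z2+w2) = d1^2 + d2^2" using r1 r2 by (simp add: algebra_simps)
  have l2: "d1*(z2+w2) - d2*(z1+w1) = 0" using im by (simp add: algebra_simps)
  have s1: "z1 + w1 = d1"
  proof -
    have "(d1^2+d2^2)*(z1+w1) = d1*(d1*(z1+w1) + d2*(z2+w2)) - d2*(d1*(z2+w2) - d2*(z1+w1))" by algebra
    also have "... = (d1^2+d2^2)*d1" using l1 l2 by (simp add: algebra_simps)
    finally have X: "(d1^2+d2^2)*(z1+w1) = (d1^2+d2^2)*d1" .
    have "d1^2+d2^2 \<noteq> 0" using D by (smt (verit))
    then show ?thesis using X by (metis mult_left_cancel)
  qed
  have s2: "z2 + w2 = d2"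
  proof -
    have "(d1^2+d2^2)*(z2+w2) = d2*(d1*(z1+w1) + d2*(z2+w2)) + d1*(d1*(z2+w2) - d2*(z1+w1))" by algebra
    also have "... = (d1^2+d2^2)*d2" using l1 l2 by (simp add: algebra_simps)
    finally have X: "(d1^2+d2^2)*(z2+w2) = (d1^2+d2^2)*d2" .
    have "d1^2+d2^2 \<noteq> 0" using D by (smt (verit))
    then show ?thesis using X by (metis mult_left_cancel)
  qed
  have "z + w = d" using s1 s2 z w d by (simp add: complex_eq_iff)
  moreover have "Im (z * cnj w) = d1*z2 - d2*z1"
    proof -
    have "w1 = d1 - z1" "w2 = d2 - z2" using s1 s2 by auto
    have "Im (z * cnj w) = z2*w1 - z1*w2" using z w by simp
    also have "... = z2*(d1 - z1) - z1*(d2 - z2)" using s1 s2 by (simp only: \<open>w1 = d1 - z1\<close> \<open>w2 = d2 - z2\<close>)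
    also have "... = d1*z2 - d2*z1" by algebra
    finally show ?thesis .
  qed
  ultimately show ?thesis using i1 by simp
qed
lemma trig:
  fixes z w :: complex and r :: real
  assumes "r > 0" "cmod z = r" "cmod w = r" "Im (z * cnj w) \<ge> 0"
  shows "(cmod (z - w))^2 = 4*r^2*(sin (Arg (z/w)/2))^2 \<and>
    (cmod (z + w))^2 = 4*r^2*(cos (Arg (z/w)/2))^2 \<and>
    sin (Arg (z/w)/2) * cos (Arg (z/w)/2) \<ge> 0"
proof -
  define q where "q = z/w"
  define t where "t = Arg q / 2"
  have w0: "w \<noteq> 0" using assms by auto
  have q0: "q \<noteq> 0" using assms q_def by auto
  have cq: "cmod q = 1" using assms q_def by (simp add: norm_divide)
  have qd: "q = z * cnj w / complex_of_real (r^2)" using q_def complex_div_cnj[of z w] assms(3) by simp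
  have Req: "Re q = Re (z * cnj w) / r^2" using qd by (simp add: Re_divide_of_real)
  have Imq: "Im q \<ge> 0" using qd assms by (simp add: Im_divide_of_real)
  have sg: "sgn q = q" using cq by (simp add: sgn_div_norm)
  have "cis (Arg q) = q" using Arg_correct[OF q0] sg by simp
  then have cA: "cos (Arg q) = Re q" by (metis cis.sel(1))
  have A0: "0 \<le> Arg q" using Imq Arg_less_0 by blast
  have A1: "Arg q \<le> pi" by (rule Arg_le_pi)
  have "2*t = Arg q" using t_def by simp
  then have c2: "cos (2*t) = Re q" using cA by simp
  obtain z1 z2 where z: "z = Complex z1 z2" by (metis complex.exhaust)
  obtain w1 w2 where w: "w = Complex w1 w2" by (metis complex.exhaust)
  have e1: "z1^2 + z2^2 = r^2" using assms(2) cmod_power2[of z] z by simp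
  have e2: "w1^2 + w2^2 = r^2" using assms(3) cmod_power2[of w] w by simp
  have Rzw: "Re (z * cnj w) = z1*w1 + z2*w2" using z w by simp
  have r2: "r^2 > 0" using assms by simp
  have h1: "(cmod (z - w))^2 = 2*r^2 - 2*(z1*w1+z2*w2)"
  proof -
    have "(cmod (z - w))^2 = (z1-w1)^2 + (z2-w2)^2" using cmod_power2[of "z-w"] z w by simp
    also have "... = (z1^2+z2^2) + (w1^2+w2^2) - 2*(z1*w1+z2*w2)" by algebra
    finally show ?thesis using e1 e2 by simp
  qed
  have h2: "(cmod (z + w))^2 = 2*r^2 + 2*(z1*w1+z2*w2)"
  proof -
    have "(cmod (z + w))^2 = (z1+w1)^2 + (z2+w2)^2" using cmod_power2[of "z+w"] z w by simp
    also have "... = (z1^2+z2^2) + (w1^2+w2^2) + 2*(z1*w1+z2*w2)" by algebra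
    finally show ?thesis using e1 e2 by simp
  qed
  have P: "z1*w1+z2*w2 = r^2 * cos (2*t)" using c2 Req Rzw r2 by simp
  have g1: "(cmod (z - w))^2 = 4*r^2*(sin t)^2"
  proof -
    have "(cmod (z - w))^2 = 2*r^2 - 2*(r^2 * cos (2*t))" using h1 P by simp
    also have "... = 2*r^2*(1 - cos (2*t))" by (simp add: algebra_simps)
    also have "1 - cos (2*t) = 2*(sin t)^2" using cos_double_sin[of t] by simp
    finally show ?thesis by simp
  qed
  have g2: "(cmod (z + w))^2 = 4*r^2*(cos t)^2"
  proof -
    have "(cmod (z + w))^2 = 2*r^2 + 2*(r^2 * cos (2*t))" using h2 P by simp
    also have "... = 2*r^2*(1 + cos (2*t))" by (simp add: algebra_simps)
    also have "1 + cos (2*t) = 2*(cos t)^2" using cos_double_cos[of t] by simp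
    finally show ?thesis by simp
  qed
  have "sin t * cos t = sin (Arg q) / 2" using sin_double[of t] \<open>2*t = Arg q\<close> by simp
  moreover have "sin (Arg q) \<ge> 0" using A0 A1 by (simp add: sin_ge_zero)
  ultimately have g3: "sin t * cos t \<ge> 0" by simp
  show ?thesis using g1 g2 g3 q_def t_def by simp
qed

lemma final:
  fixes t s :: real
  assumes "sin t * cos t \<ge> 0" "s = 1 / (2 * sqrt (sin t * cos t))"
  shows "s^2 * (4 * (sin t)^2) = tan t \<and> s^2 * (4 * (cos t)^2) = tan (pi/2 - t)"
proof -
  have s2: "s^2 = 1 / (4 * (sin t * cos t))" using assms by (simp add: power_divide power_mult_distrib)
  have "tan (pi/2 - t) = cos t / sin t" by (simp add: tan_def sin_diff cos_diff)
  moreover have "tan t = sin t / cos t" by (simp add: tan_def)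
  ultimately show ?thesis using s2 by (auto simp: power2_eq_square field_simps)
qed
definition sE :: "('v, 'f, 'e) iso_graph \<Rightarrow> 'e \<Rightarrow> real" where
  "sE G e = 1 / (2 * sqrt (sin (half_angle G e) * cos (half_angle G e)))"

definition aE :: "('v, 'f, 'e) iso_graph \<Rightarrow> 'e \<Rightarrow> complex" where
  "aE G e = \<i> * (ctr G (lft G e) - ctr G (rgt G e)) / complex_of_real (rad G)"

definition bE :: "('v, 'f, 'e) iso_graph \<Rightarrow> 'e \<Rightarrow> complex" where
  "bE G e = \<i> * (posn G (src G e) - posn G (tgt G e)) / complex_of_real (rad G)"

lemma Smat_Inr: "Smat G (Inr e) = complex_of_real (sE G e)"
  by (simp add: Smat_def sE_def)

lemma dbar_v:
  assumes "e \<in> Es G" "rad G > 0"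
  shows "dbar_wb G e (Inl v) = complex_of_real ((if src G e = v then 1 else 0) - (if tgt G e = v then 1 else 0)) * aE G e"
  using assms by (auto simp: dbar_wb_def GD_half_edges_def Let_def midp_def scl_def aE_def field_simps)

lemma dbar_f:
  assumes "e \<in> Es G" "rad G > 0"
  shows "dbar_wb G e (Inr f) = complex_of_real ((if rgt G e = f then 1 else 0) - (if lft G e = f then 1 else 0)) * bE G e"
  using assms by (auto simp: dbar_wb_def GD_half_edges_def Let_def midp_def scl_def bE_def field_simps)

lemma edge_weights:
  assumes iso: "isoradial_embedding G" and e: "e \<in> Es G"
  shows "(sE G e)^2 * (cmod (aE G e))^2 = cond G e \<and> (sE G e)^2 * (cmod (bE G e))^2 = cond_dual G e"
proof -
  define u where "u = posn G (src G e)"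
  define u' where "u' = posn G (tgt G e)"
  define fl where "fl = ctr G (lft G e)"
  define fr where "fr = ctr G (rgt G e)"
  define r where "r = rad G"
  have r0: "r > 0" using iso r_def by (simp add: isoradial_embedding_def)
  have H: "src G e \<in> Vs G" "tgt G e \<in> Vs G" "src G e \<noteq> tgt G e"
      "cmod (u - fl) = r" "cmod (u' - fl) = r" "cmod (u - fr) = r" "cmod (u' - fr) = r"
      "Im (cnj (u' - u) * (fl - u)) \<ge> 0" "Im (cnj (u' - u) * (fr - u)) \<le> 0"
    using iso e unfolding isoradial_embedding_def u_def u'_def fl_def fr_def r_def by auto
  have inj: "inj_on (posn G) (Vs G)" using iso by (simp add: isoradial_embedding_def)
  have d0: "u' - u \<noteq> 0" using H(1-3) inj u_def u'_def by (auto dest: inj_onD)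
  have g: "(fl - u) + (fr - u) = u' - u \<and> Im ((fl - u) * cnj (fr - u)) \<ge> 0"
    apply (rule geom[where r = r])
    using H r0 d0 by (auto simp: norm_minus_commute)
  have ha: "half_angle G e = Arg ((fl - u) / (fr - u)) / 2"
    by (simp add: half_angle_def fl_def fr_def u_def)
  have t: "(cmod ((fl - u) - (fr - u)))^2 = 4*r^2*(sin (half_angle G e))^2 \<and>
    (cmod ((fl - u) + (fr - u)))^2 = 4*r^2*(cos (half_angle G e))^2 \<and>
    sin (half_angle G e) * cos (half_angle G e) \<ge> 0"
    unfolding ha apply (rule trig)
    using H r0 g by (auto simp: norm_minus_commute)
  have f: "(sE G e)^2 * (4 * (sin (half_angle G e))^2) = tan (half_angle G e) \<and>
      (sE G e)^2 * (4 * (cos (half_angle G e))^2) = tan (pi/2 - half_angle G e)"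
    apply (rule final)
    using t apply blast
    by (simp add: sE_def)
  have ca: "(cmod (aE G e))^2 = 4 * (sin (half_angle G e))^2"
  proof -
    have "cmod (aE G e) = cmod (fl - fr) / r" using r0
      by (simp add: aE_def fl_def fr_def r_def norm_divide norm_mult)
    then have "(cmod (aE G e))^2 = (cmod ((fl - u) - (fr - u)))^2 / r^2" by (simp add: power_divide)
    then show ?thesis using t r0 by simp
  qed
  have cb: "(cmod (bE G e))^2 = 4 * (cos (half_angle G e))^2"
  proof -
    have "cmod (bE G e) = cmod (u' - u) / r" using r0
      by (simp add: bE_def u_def u'_def r_def norm_divide norm_mult norm_minus_commute)
    then have "(cmod (bE G e))^2 = (cmod ((fl - u) + (fr - u)))^2 / r^2" using g by (simp add: power_divide)
    then show ?thesis using t r0 by simp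
  qed
  show ?thesis using f ca cb by (simp add: cond_def cond_dual_def)
qed
lemma term_eq:
  fixes s x y :: real and a :: complex
  shows "cnj (complex_of_real s * (complex_of_real x * a) * 1) * (complex_of_real s * (complex_of_real y * a) * 1)
     = complex_of_real (s^2 * (cmod a)^2 * (x*y))"
  apply (simp add: complex_eq_iff cmod_power2)
  apply (simp add: power2_eq_square algebra_simps)
  done

lemma Smat_Inl: "Smat G (Inl b) = 1" by (simp add: Smat_def)

theorem lemma6p1:
  fixes G :: "('v, 'f, 'e) iso_graph"
  assumes "isoradial_embedding G"
  shows "(\<forall>b\<in>Vs G. \<forall>b'\<in>Vs G.
            DstarD G (Inl (Inl b)) (Inl (Inl b')) = complex_of_real (lap_T_mat G b b'))
       \<and> (\<forall>b\<in>Fs G. \<forall>b'\<in>Fs G.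
            DstarD G (Inl (Inr b)) (Inl (Inr b')) = complex_of_real (lap_D_mat G b b'))"
proof (intro conjI ballI)
  have r0: "rad G > 0" using assms by (simp add: isoradial_embedding_def)
  have Es_prop: "\<And>e. e \<in> Es G \<Longrightarrow> src G e \<noteq> tgt G e"
    using assms by (simp add: isoradial_embedding_def)
  fix b b' assume b: "b \<in> Vs G" and b': "b' \<in> Vs G"
  define E where "E = {e\<in>Es G. src G e = b \<or> tgt G e = b}"
  have fin: "finite E" using assms b by (simp add: isoradial_embedding_def E_def)
  define sg where "sg = (\<lambda>e v. (if src G e = v then 1 else 0) - (if tgt G e = v then (1::real) else 0))"
  define F where "F = (\<lambda>x. cnj (Dbar G x (Inl (Inl b))) * Dbar G x (Inl (Inl b')))"
  have FI: "F (Inr e) = complex_of_real (cond G e * (sg e b * sg e b'))" if "e \<in> Es G" for e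
  proof -
    have "F (Inr e) = complex_of_real ((sE G e)^2 * (cmod (aE G e))^2 * (sg e b * sg e b'))"
    proof -
      have D: "Dbar G (Inr e) (Inl (Inl v)) = complex_of_real (sE G e) * (complex_of_real (sg e v) * aE G e) * 1" for v
        by (simp add: Dbar_def dbar_def Smat_Inr Smat_Inl dbar_v[OF that r0] sg_def)
      show ?thesis unfolding F_def D by (rule term_eq)
    qed
    then show ?thesis using edge_weights[OF assms that] by simp
  qed
  have sub: "Inr ` E \<subseteq> GD_vertices G" by (auto simp: GD_vertices_def E_def)
  have zero: "F x = 0" if "x \<in> GD_vertices G - Inr ` E" for x
  proof (cases x)
    case (Inl y)
    then show ?thesis by (simp add: F_def Dbar_def dbar_def)
  next
    case (Inr e)
    then have e: "e \<in> Es G" "e \<notin> E" using that by (auto simp: GD_vertices_def)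
    then have "sg e b = 0" by (auto simp: E_def sg_def)
    then show ?thesis using FI[OF e(1)] Inr by simp
  qed
  have "DstarD G (Inl (Inl b)) (Inl (Inl b')) = infsum F (Inr ` E)"
    unfolding DstarD_def F_def[symmetric]
    apply (rule infsum_cong_neutral)
    using zero sub by auto
  also have "... = sum F (Inr ` E)" using fin by (simp add: infsum_finite)
  also have "... = (\<Sum>e\<in>E. F (Inr e))" by (simp add: sum.reindex)
  also have "... = (\<Sum>e\<in>E. complex_of_real (cond G e * (sg e b * sg e b')))"
    apply (rule sum.cong[OF refl])
    apply (rule FI)
    apply (simp add: E_def)
    done
  also have "... = complex_of_real (\<Sum>e\<in>E. cond G e * (sg e b * sg e b'))" by simp
  also have "(\<Sum>e\<in>E. cond G e * (sg e b * sg e b')) = lap_T_mat G b b'"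
    unfolding lap_T_mat_def lap_T_def E_def[symmetric]
    apply (rule sum.cong, rule refl)
    using Es_prop by (auto simp: E_def sg_def)
  finally show "DstarD G (Inl (Inl b)) (Inl (Inl b')) = complex_of_real (lap_T_mat G b b')" .
next
  have r0: "rad G > 0" using assms by (simp add: isoradial_embedding_def)
  fix b b' assume b: "b \<in> Fs G" and b': "b' \<in> Fs G"
  define E where "E = {e\<in>Es G. lft G e = b \<or> rgt G e = b}"
  have fin: "finite E" using assms b by (simp add: isoradial_embedding_def E_def)
  define sg where "sg = (\<lambda>e v. (if rgt G e = v then 1 else 0) - (if lft G e = v then (1::real) else 0))"
  define F where "F = (\<lambda>x. cnj (Dbar G x (Inl (Inr b))) * Dbar G x (Inl (Inr b')))"
  have FI: "F (Inr e) = complex_of_real (cond_dual G e * (sg e b * sg e b'))" if "e \<in> Es G" for e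
  proof -
    have "F (Inr e) = complex_of_real ((sE G e)^2 * (cmod (bE G e))^2 * (sg e b * sg e b'))"
    proof -
      have D: "Dbar G (Inr e) (Inl (Inr v)) = complex_of_real (sE G e) * (complex_of_real (sg e v) * bE G e) * 1" for v
        by (simp add: Dbar_def dbar_def Smat_Inr Smat_Inl dbar_f[OF that r0] sg_def)
      show ?thesis unfolding F_def D by (rule term_eq)
    qed
    then show ?thesis using edge_weights[OF assms that] by simp
  qed
  have sub: "Inr ` E \<subseteq> GD_vertices G" by (auto simp: GD_vertices_def E_def)
  have zero: "F x = 0" if "x \<in> GD_vertices G - Inr ` E" for x
  proof (cases x)
    case (Inl y)
    then show ?thesis by (simp add: F_def Dbar_def dbar_def)
  next
    case (Inr e)
    then have e: "e \<in> Es G" "e \<notin> E" using that by (auto simp: GD_vertices_def)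
    then have "sg e b = 0" by (auto simp: E_def sg_def)
    then show ?thesis using FI[OF e(1)] Inr by simp
  qed
  have "DstarD G (Inl (Inr b)) (Inl (Inr b')) = infsum F (Inr ` E)"
    unfolding DstarD_def F_def[symmetric]
    apply (rule infsum_cong_neutral)
    using zero sub by auto
  also have "... = sum F (Inr ` E)" using fin by (simp add: infsum_finite)
  also have "... = (\<Sum>e\<in>E. F (Inr e))" by (simp add: sum.reindex)
  also have "... = (\<Sum>e\<in>E. complex_of_real (cond_dual G e * (sg e b * sg e b')))"
    apply (rule sum.cong[OF refl])
    apply (rule FI)
    apply (simp add: E_def)
    done
  also have "... = complex_of_real (\<Sum>e\<in>E. cond_dual G e * (sg e b * sg e b'))" by simp
  also have "(\<Sum>e\<in>E. cond_dual G e * (sg e b * sg e b')) = lap_D_mat G b b'"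
    unfolding lap_D_mat_def lap_D_def E_def[symmetric]
    apply (rule sum.cong, rule refl)
    by (auto simp: E_def sg_def)
  finally show "DstarD G (Inl (Inr b)) (Inl (Inr b')) = complex_of_real (lap_D_mat G b b')" .
qed
end
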